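(* Let $d\ge3$ and $n=d+1$. The maximum size of a family $\mathcal{A}\subset2^{[n]}$ with $\mathrm{VC}(\mathcal{A}\cap\mathcal{A})\le d$ and $\mathrm{VC}(\mathcal{A}\cup\mathcal{A})\le d$ is $2^n-2$.
   Context: $[n]=\{1,\dots,n\}$. $\mathrm{VC}(\mathcal{F})$ is the largest cardinality of a $Y\subset[n]$ with $\{S\cap Y:S\in\mathcal{F}\}=2^Y$. $\mathcal{A}\cap\mathcal{A}=\{S\cap T:S,T\in\mathcal{A}\}$ and $\mathcal{A}\cup\mathcal{A}=\{S\cup T:S,T\in\mathcal{A}\}$. *)

theory Defs
  imports Main
begin

definition shatters :: "nat set set \<Rightarrow> nat set \<Rightarrow> bool" where
  "shatters F Y \<longleftrightarrow> (\<lambda>S. S \<inter> Y) ` F = Pow Y"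

text \<open>VC dimension over ground set [n] = {1..n}: largest cardinality of a shattered Y \<subseteq> [n]
  (Sup of a finite set of naturals; 0 if nothing is shattered, i.e. F empty).\<close>
definition VC :: "nat \<Rightarrow> nat set set \<Rightarrow> nat" where
  "VC n F = Sup {card Y | Y. Y \<subseteq> {1..n} \<and> shatters F Y}"

definition fam_inter :: "nat set set \<Rightarrow> nat set set" where
  "fam_inter A = {S \<inter> T | S T. S \<in> A \<and> T \<in> A}"

definition fam_union :: "nat set set \<Rightarrow> nat set set" where
  "fam_union A = {S \<union> T | S T. S \<in> A \<and> T \<in> A}"

end

theory Submission
  imports Defs
begin

lemma VC_finite: "finite {card Y | Y. Y \<subseteq> {1..n} \<and> shatters F Y}"
proof -
  have "{card Y | Y. Y \<subseteq> {1..n} \<and> shatters F Y} \<subseteq> card ` Pow {1..(n::nat)}" by auto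
  thus ?thesis by (rule finite_subset) simp
qed

lemma VC_le:
  assumes "\<And>Y. Y \<subseteq> {1..n} \<Longrightarrow> shatters F Y \<Longrightarrow> card Y \<le> d"
  shows "VC n F \<le> d"
  unfolding VC_def Sup_nat_def using VC_finite[of n F] assms
  by (auto simp: Max_le_iff)

lemma VC_ge:
  assumes "shatters F {1..n}"
  shows "n \<le> VC n F"
proof -
  have "n \<in> {card Y | Y. Y \<subseteq> {1..n} \<and> shatters F Y}" using assms by force
  then show ?thesis unfolding VC_def Sup_nat_def using VC_finite[of n F]
    by (auto intro: Max_ge)
qed

lemma full_shatter:
  assumes "F \<subseteq> Pow {1..n}" "Pow {1..n} \<subseteq> F"
  shows "shatters F {1..n}"
proof -
  have "F = Pow {1..n}" using assms by blast
  moreover have "(\<lambda>S. S \<inter> {1..n}) ` Pow {1..n} = Pow {1..(n::nat)}"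
    by (auto simp: image_iff)
  ultimately show ?thesis unfolding shatters_def by simp
qed

lemma card_big:
  assumes Y: "Y \<subseteq> {1..n}" and c: "card Y > d" and n: "n = d + 1"
  shows "Y = {1..n}"
proof -
  have "card Y \<le> card {1..n}" using Y by (intro card_mono) auto
  hence "card Y = card {1..n}" using c n by simp
  thus ?thesis using Y by (intro card_subset_eq) auto
qed

theorem mainTheorem10:
  fixes d n :: nat
  assumes "d \<ge> 3" and "n = d + 1"
  shows "(\<exists>A. A \<subseteq> Pow {1..n} \<and> VC n (fam_inter A) \<le> d \<and> VC n (fam_union A) \<le> d
              \<and> card A = 2 ^ n - 2)
       \<and> (\<forall>A. A \<subseteq> Pow {1..n} \<and> VC n (fam_inter A) \<le> d \<and> VC n (fam_union A) \<le> d
              \<longrightarrow> card A \<le> 2 ^ n - 2)"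
proof
  let ?P = "Pow {1..n}"
  let ?A = "?P - {{}, {1..n}}"
  have ne: "{} \<noteq> {1..n}" using assms by auto
  have "VC n (fam_inter ?A) \<le> d"
  proof (rule VC_le)
    fix Y assume Y: "Y \<subseteq> {1..n}" and sh: "shatters (fam_inter ?A) Y"
    show "card Y \<le> d"
    proof (rule ccontr)
      assume "\<not> card Y \<le> d"
      hence YY: "Y = {1..n}" using card_big[OF Y _ assms(2)] by simp
      have "Y \<in> (\<lambda>S. S \<inter> Y) ` fam_inter ?A" using sh unfolding shatters_def by auto
      then obtain S T where "S \<in> ?A" "T \<in> ?A" "S \<inter> T \<inter> Y = Y"
        unfolding fam_inter_def by auto
      thus False using YY by auto
    qed
  qed
  moreover have "VC n (fam_union ?A) \<le> d"
  proof (rule VC_le)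
    fix Y assume Y: "Y \<subseteq> {1..n}" and sh: "shatters (fam_union ?A) Y"
    show "card Y \<le> d"
    proof (rule ccontr)
      assume "\<not> card Y \<le> d"
      hence YY: "Y = {1..n}" using card_big[OF Y _ assms(2)] by simp
      have "{} \<in> (\<lambda>S. S \<inter> Y) ` fam_union ?A" using sh unfolding shatters_def by auto
      then obtain S T where "S \<in> ?A" "T \<in> ?A" "(S \<union> T) \<inter> Y = {}"
        unfolding fam_union_def by auto
      thus False using YY by auto
    qed
  qed
  moreover have "card ?A = 2 ^ n - 2"
  proof -
    have "card ?A = card ?P - card {{}, {1..n}}" by (intro card_Diff_subset) auto
    thus ?thesis using ne by (simp add: card_Pow)
  qed
  ultimately show "\<exists>A. A \<subseteq> ?P \<and> VC n (fam_inter A) \<le> d \<and> VC n (fam_union A) \<le> d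
              \<and> card A = 2 ^ n - 2" by (intro exI[of _ ?A]) auto
next
  show "\<forall>A. A \<subseteq> Pow {1..n} \<and> VC n (fam_inter A) \<le> d \<and> VC n (fam_union A) \<le> d
              \<longrightarrow> card A \<le> 2 ^ n - 2"
  proof (intro allI impI, elim conjE, rule ccontr)
    fix A assume A: "A \<subseteq> Pow {1..n}" and vi: "VC n (fam_inter A) \<le> d"
      and vu: "VC n (fam_union A) \<le> d" and c: "\<not> card A \<le> 2 ^ n - 2"
    have fi: "fam_inter A \<subseteq> Pow {1..n}" using A unfolding fam_inter_def by auto
    have fu: "fam_union A \<subseteq> Pow {1..n}" using A unfolding fam_union_def by auto
    have Ai: "A \<subseteq> fam_inter A" unfolding fam_inter_def by force
    have Au: "A \<subseteq> fam_union A" unfolding fam_union_def by force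
    have noti: "\<not> Pow {1..n} \<subseteq> fam_inter A"
      using VC_ge[OF full_shatter[OF fi]] vi assms by auto
    have notu: "\<not> Pow {1..n} \<subseteq> fam_union A"
      using VC_ge[OF full_shatter[OF fu]] vu assms by auto
    then obtain X where X: "X \<in> Pow {1..n}" "X \<notin> A" using Au by blast
    have cP: "card (Pow {1..n} - {X}) = 2 ^ n - 1" using X by (simp add: card_Pow)
    have "A \<subseteq> Pow {1..n} - {X}" using A X by auto
    moreover have "card A \<ge> 2 ^ n - 1" using c by simp
    ultimately have AX: "A = Pow {1..n} - {X}"
    proof -
      have "card A \<le> card (Pow {1..n} - {X})" using \<open>A \<subseteq> Pow {1..n} - {X}\<close> by (intro card_mono) auto
      hence "card A = card (Pow {1..n} - {X})" using cP \<open>card A \<ge> _\<close> by linarith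
      thus ?thesis using \<open>A \<subseteq> Pow {1..n} - {X}\<close> by (intro card_subset_eq) auto
    qed
    show False
    proof (cases "card ({1..n} - X) \<ge> 2")
      case True
      then obtain a b where ab: "a \<in> {1..n} - X" "b \<in> {1..n} - X" "a \<noteq> b"
        by (metis One_nat_def card_le_Suc0_iff_eq not_less_eq_eq numeral_2_eq_2 finite_Diff finite_atLeastAtMost)
      have "X = insert a X \<inter> insert b X" using ab by auto
      moreover have "insert a X \<in> A" "insert b X \<in> A" using ab X AX by auto
      ultimately have "X \<in> fam_inter A" unfolding fam_inter_def by blast
      hence "Pow {1..n} \<subseteq> fam_inter A" using Ai AX by auto
      thus False using noti by simp
    next
      case False
      have fX: "finite X" using X finite_subset by auto
      have "card {1..n} = card ({1..n} - X) + card X"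
        using X by (metis card_Diff_subset finite_atLeastAtMost fX Pow_iff card_mono le_add_diff_inverse2)
      hence "card X \<ge> 2" using False assms by simp
      then obtain a b where ab: "a \<in> X" "b \<in> X" "a \<noteq> b"
        by (metis One_nat_def card_le_Suc0_iff_eq not_less_eq_eq numeral_2_eq_2 fX)
      have "X = (X - {a}) \<union> (X - {b})" using ab by auto
      moreover have "X - {a} \<in> A" "X - {b} \<in> A" using ab X AX by auto
      ultimately have "X \<in> fam_union A" unfolding fam_union_def by blast
      hence "Pow {1..n} \<subseteq> fam_union A" using Au AX by auto
      thus False using notu by simp
    qed
  qed
qed

end
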